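(* Let $\Phi:(X,d^X,\mu,T)\to(Y,d^Y,\nu,S)$ be a Borel factor map of compact model p.-p. systems, and let $\varepsilon>0$. Then there is $L<\infty$ such that for all sufficiently large $N\in\mathbb{N}$ there is a compact subset $X_0\subseteq X$ with $\mu(X_0)>1-\varepsilon$ such that $\Phi|_{X_0}$ is continuous and is $(\varepsilon N)$-almost $L$-Lipschitz both as a map $(X_0,d^{\mathbf{X}}_{[-N;0)})\to(Y,d^{\mathbf{Y}}_{[-N;0)})$ and as a map $(X_0,d^{\mathbf{X}}_{[0;N)})\to(Y,d^{\mathbf{Y}}_{[0;N)})$.
   Context: Compact model p.-p. system $(X,d^X,\mu,T)$: compact metric space, homeomorphism $T$, $T$-invariant Borel probability $\mu$. $d^{\mathbf{X}}_F(x,x')=\sum_{n\in F}d^X(T^nx,T^nx')$ for finite $F\subseteq\mathbb{Z}$. A Borel factor map is a Borel $\Phi$ with $\Phi\circ T=S\circ\Phi$ $\mu$-a.e. and $\Phi_*\mu=\nu$. A map $f$ between (pseudo)metric spaces is $c$-almost $L$-Lipschitz if $d(f(x),f(x'))\le Ld(x,x')+c$ for all $x,x'$. *)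

theory Defs
  imports "HOL-Analysis.Analysis" "HOL-Probability.Probability"
begin

definition zpow :: "('a \<Rightarrow> 'a) \<Rightarrow> int \<Rightarrow> 'a \<Rightarrow> 'a" where
  "zpow T n = (if 0 \<le> n then T ^^ nat n else (inv T) ^^ nat (- n))"

definition dyn_dist :: "('a::metric_space \<Rightarrow> 'a) \<Rightarrow> int set \<Rightarrow> 'a \<Rightarrow> 'a \<Rightarrow> real" where
  "dyn_dist T F x x' = (\<Sum>n\<in>F. dist (zpow T n x) (zpow T n x'))"

definition compact_model_pps :: "'a::metric_space measure \<Rightarrow> ('a \<Rightarrow> 'a) \<Rightarrow> bool" where
  "compact_model_pps M T \<longleftrightarrow> compact (UNIV :: 'a set) \<and>
     (\<exists>T'. homeomorphism UNIV UNIV T T') \<and>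
     prob_space M \<and> sets M = sets borel \<and> T \<in> M \<rightarrow>\<^sub>M M \<and> distr M M T = M"

definition borel_factor_map ::
  "'a::metric_space measure \<Rightarrow> ('a \<Rightarrow> 'a) \<Rightarrow> 'b::metric_space measure \<Rightarrow> ('b \<Rightarrow> 'b) \<Rightarrow> ('a \<Rightarrow> 'b) \<Rightarrow> bool" where
  "borel_factor_map M T N S \<Phi> \<longleftrightarrow> \<Phi> \<in> borel_measurable borel \<and>
     (AE x in M. \<Phi> (T x) = S (\<Phi> x)) \<and> distr M N \<Phi> = N"

definition almost_lipschitz_on ::
  "'a set \<Rightarrow> ('a \<Rightarrow> 'a \<Rightarrow> real) \<Rightarrow> ('b \<Rightarrow> 'b \<Rightarrow> real) \<Rightarrow> real \<Rightarrow> real \<Rightarrow> ('a \<Rightarrow> 'b) \<Rightarrow> bool" where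
  "almost_lipschitz_on A dA dB c L f \<longleftrightarrow> (\<forall>x\<in>A. \<forall>x'\<in>A. dB (f x) (f x') \<le> L * dA x x' + c)"

end

theory Submission
  imports Defs
begin

lemma approx_reg:
  fixes M :: "'a::metric_space measure"
  assumes fm: "finite_measure M" and sb: "sets M = sets borel" and B: "B \<in> sets borel"
  shows "\<forall>e>0. \<exists>F U. closed F \<and> open U \<and> F \<subseteq> B \<and> B \<subseteq> U \<and> measure M (U - F) < e"
  using B unfolding sets_borel
proof (induction rule: sigma_sets.induct)
  case (Basic a)
  then have oa: "open a" by simp
  show ?case
  proof (intro allI impI)
    fix e :: real assume e: "e > 0"
    show "\<exists>F U. closed F \<and> open U \<and> F \<subseteq> a \<and> a \<subseteq> U \<and> measure M (U - F) < e"
    proof (cases "a = UNIV")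
      case True
      then show ?thesis using e by (intro exI[of _ UNIV]) auto
    next
      case False
      define A where "A j = {x. 1 / real (Suc j) \<le> infdist x (- a)}" for j
      have clA: "closed (A j)" for j
        unfolding A_def by (intro closed_Collect_le continuous_intros)
      have Asub: "A j \<subseteq> a" for j
      proof
        fix x assume "x \<in> A j"
        then have "infdist x (-a) > 0"
        proof -
          have "0 < 1 / real (Suc j)" by simp
          also have "\<dots> \<le> infdist x (-a)" using \<open>x \<in> A j\<close> unfolding A_def by simp
          finally show ?thesis .
        qed
        then show "x \<in> a" using infdist_zero[of x "-a"] by (cases "x \<in> a") auto
      qed
      have inc: "incseq A"
      proof (rule incseq_SucI)
        fix j
        have "1 / real (Suc (Suc j)) \<le> 1 / real (Suc j)"
          by (intro divide_left_mono) auto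
        then show "A j \<subseteq> A (Suc j)" unfolding A_def by auto
      qed
      have UA: "(\<Union>j. A j) = a"
      proof
        show "(\<Union>j. A j) \<subseteq> a" using Asub by (simp add: UN_subset_iff)
        show "a \<subseteq> (\<Union>j. A j)"
        proof
          fix x assume xa: "x \<in> a"
          have "infdist x (-a) > 0"
          proof (rule infdist_pos_not_in_closed)
            show "closed (- a)" using oa by (simp add: closed_Compl)
            show "- a \<noteq> {}" using False by auto
            show "x \<notin> - a" using xa by simp
          qed
          then obtain j where "inverse (real (Suc j)) < infdist x (-a)"
            using reals_Archimedean[of "infdist x (-a)"] by auto
          then have "1 / real (Suc j) \<le> infdist x (-a)" by (simp add: inverse_eq_divide)
          then have "x \<in> A j" unfolding A_def by simp
          then show "x \<in> (\<Union>j. A j)" by (rule UN_I[OF UNIV_I])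
        qed
      qed
      interpret finite_measure M by fact
      have Ameas: "A j \<in> sets M" for j using clA sb by simp
      have "(\<lambda>j. measure M (A j)) \<longlonglongrightarrow> measure M (\<Union>j. A j)"
        using Ameas inc by (intro finite_Lim_measure_incseq) auto
      then have "(\<lambda>j. measure M (A j)) \<longlonglongrightarrow> measure M a" using UA by simp
      then have "\<forall>\<^sub>F j in sequentially. dist (measure M (A j)) (measure M a) < e"
        by (rule tendstoD[OF _ e])
      then obtain j where j: "dist (measure M (A j)) (measure M a) < e"
        unfolding eventually_sequentially by auto
      have "measure M (a - A j) = measure M a - measure M (A j)"
        using Asub[of j] Ameas[of j] oa sb by (intro finite_measure_Diff) auto
      then have "measure M (a - A j) < e" using j by (simp add: dist_real_def)
      then have "closed (A j) \<and> open a \<and> A j \<subseteq> a \<and> a \<subseteq> a \<and> measure M (a - A j) < e"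
        using clA[of j] Asub[of j] oa by simp
      then show ?thesis by blast
    qed
  qed
next
  case Empty
  show ?case
  proof (intro allI impI)
    fix e :: real assume "e > 0"
    then show "\<exists>F U. closed F \<and> open U \<and> F \<subseteq> {} \<and> {} \<subseteq> U \<and> measure M (U - F) < e"
      by (intro exI[of _ "{}"] conjI) auto
  qed
next
  case (Compl a)
  show ?case
  proof (intro allI impI)
    fix e :: real assume "e > 0"
    then have "\<exists>F U. closed F \<and> open U \<and> F \<subseteq> a \<and> a \<subseteq> U \<and> measure M (U - F) < e"
      using Compl.IH by simp
    then obtain F U where FU: "closed F" "open U" "F \<subseteq> a" "a \<subseteq> U" "measure M (U - F) < e"
      by blast
    have eq: "(- F) - (- U) = U - F" by blast
    show "\<exists>F' U'. closed F' \<and> open U' \<and> F' \<subseteq> UNIV - a \<and> UNIV - a \<subseteq> U' \<and> measure M (U' - F') < e"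
    proof (rule exI[of _ "- U"], rule exI[of _ "- F"], intro conjI)
      show "closed (- U)" using FU(2) by (simp add: closed_Compl)
      show "open (- F)" using FU(1) by (simp add: open_Compl)
      show "- U \<subseteq> UNIV - a" using FU(4) by blast
      show "UNIV - a \<subseteq> - F" using FU(3) by blast
      show "measure M ((- F) - (- U)) < e" using FU(5) eq by simp
    qed
  qed
next
  case (Union a)
  interpret finite_measure M by fact
  have ameas: "a i \<in> sets M" for i using Union.hyps sb sets_borel by metis
  show ?case
  proof (intro allI impI)
    fix e :: real assume e: "e > 0"
    have "\<forall>i. \<exists>F U. closed F \<and> open U \<and> F \<subseteq> a i \<and> a i \<subseteq> U \<and> measure M (U - F) < e/4 * (1/2)^i"
    proof
      fix i
      have "e/4 * (1/2)^i > 0" using e by simp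
      then show "\<exists>F U. closed F \<and> open U \<and> F \<subseteq> a i \<and> a i \<subseteq> U \<and> measure M (U - F) < e/4 * (1/2)^i"
        using Union.IH[of i] by blast
    qed
    then obtain F U where FU: "\<And>i. closed (F i)" "\<And>i. open (U i)" "\<And>i. F i \<subseteq> a i" "\<And>i. a i \<subseteq> U i"
       "\<And>i. measure M (U i - F i) < e/4 * (1/2)^i"
      by metis
    define B where "B N = (\<Union>i<N. a i)" for N
    have Bmeas: "B N \<in> sets M" for N unfolding B_def using ameas by auto
    have incB: "incseq B" unfolding B_def incseq_def by (auto intro: order_less_le_trans)
    have UB: "(\<Union>N. B N) = (\<Union>i. a i)" unfolding B_def by auto
    have "(\<lambda>N. measure M (B N)) \<longlonglongrightarrow> measure M (\<Union>N. B N)"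
      using Bmeas incB by (intro finite_Lim_measure_incseq) auto
    then have "\<forall>\<^sub>F N in sequentially. dist (measure M (B N)) (measure M (\<Union>i. a i)) < e/2"
      using e UB tendstoD[of _ _ _ "e/2"] by simp
    then obtain N where N: "dist (measure M (B N)) (measure M (\<Union>i. a i)) < e/2"
      unfolding eventually_sequentially by auto
    have dB: "measure M ((\<Union>i. a i) - B N) < e/2"
    proof -
      have "measure M ((\<Union>i. a i) - B N) = measure M (\<Union>i. a i) - measure M (B N)"
        using Bmeas ameas by (intro finite_measure_Diff) (auto simp: B_def)
      then show ?thesis using N by (simp add: dist_real_def abs_if split: if_splits)
    qed
    define Fc where "Fc = (\<Union>i<N. F i)"
    define Uc where "Uc = (\<Union>i. U i)"
    have sub: "Uc - Fc \<subseteq> (\<Union>i. U i - F i) \<union> ((\<Union>i. a i) - B N)"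
    proof
      fix x assume x: "x \<in> Uc - Fc"
      then obtain i where xi: "x \<in> U i" unfolding Uc_def by auto
      show "x \<in> (\<Union>i. U i - F i) \<union> ((\<Union>i. a i) - B N)"
      proof (cases "x \<in> B N")
        case True
        then obtain j where "j < N" "x \<in> a j" unfolding B_def by auto
        then show ?thesis using x FU(4)[of j] unfolding Fc_def by auto
      next
        case False
        then show ?thesis using xi FU(3)[of i] by auto
      qed
    qed
    have meas1: "(\<lambda>i. U i - F i) i \<in> sets M" for i using FU sb by auto
    have sm: "summable (\<lambda>i. e/4 * (1/2)^i)"
      by (intro summable_mult summable_geometric) auto
    have summ: "summable (\<lambda>i. measure M (U i - F i))"
      by (rule summable_comparison_test'[OF sm, of 0]) (use FU(5) less_imp_le in auto)
    have "(\<Sum>i. e/4 * (1/2::real)^i) = e/2"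
    proof -
      have "(\<Sum>i. e/4 * (1/2::real)^i) = e/4 * (\<Sum>i. (1/2::real)^i)"
        by (rule suminf_mult) (rule summable_geometric, simp)
      also have "(\<Sum>i. (1/2::real)^i) = 2" using suminf_geometric[of "1/2::real"] by simp
      finally show ?thesis by simp
    qed
    moreover have "(\<Sum>i. measure M (U i - F i)) \<le> (\<Sum>i. e/4 * (1/2::real)^i)"
      by (intro suminf_le summ sm) (use FU(5) less_imp_le in auto)
    moreover have "measure M (\<Union>i. U i - F i) \<le> (\<Sum>i. measure M (U i - F i))"
      using meas1 summ by (intro finite_measure_subadditive_countably) auto
    ultimately have m1: "measure M (\<Union>i. U i - F i) \<le> e/2" by linarith
    have "measure M (Uc - Fc) \<le> measure M ((\<Union>i. U i - F i) \<union> ((\<Union>i. a i) - B N))"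
      using sub meas1 ameas Bmeas by (intro finite_measure_mono) auto
    also have "\<dots> \<le> measure M (\<Union>i. U i - F i) + measure M ((\<Union>i. a i) - B N)"
      using meas1 ameas Bmeas by (intro measure_subadditive) auto
    finally have "measure M (Uc - Fc) < e" using m1 dB by linarith
    moreover have "closed Fc" unfolding Fc_def using FU by auto
    moreover have "open Uc" unfolding Uc_def using FU by auto
    moreover have "Fc \<subseteq> (\<Union>i. a i)" unfolding Fc_def using FU(3) by blast
    moreover have "(\<Union>i. a i) \<subseteq> Uc" unfolding Uc_def using FU(4) by blast
    ultimately show "\<exists>F U. closed F \<and> open U \<and> F \<subseteq> \<Union> (range a) \<and> \<Union> (range a) \<subseteq> U \<and> measure M (U - F) < e"
      by blast
  qed
qed

lemma approx_open_piece:
  fixes M :: "'a::metric_space measure"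
  assumes fm: "finite_measure M" and sb: "sets M = sets borel" and E: "E \<in> sets borel" and eta: "\<eta> > 0"
  shows "\<exists>H U. open H \<and> open U \<and> measure M H < \<eta> \<and> E - H = U - H"
proof -
  have "\<exists>F U. closed F \<and> open U \<and> F \<subseteq> E \<and> E \<subseteq> U \<and> measure M (U - F) < \<eta>"
    using approx_reg[OF fm sb E] eta by simp
  then obtain F U where FU: "closed F" "open U" "F \<subseteq> E" "E \<subseteq> U" "measure M (U - F) < \<eta>"
    by blast
  have "E - (U - F) = U - (U - F)" using FU(3,4) by blast
  moreover have "open (U - F)" using FU(1,2) by (simp add: open_Diff)
  ultimately have "open (U - F) \<and> open U \<and> measure M (U - F) < \<eta> \<and> E - (U - F) = U - (U - F)"
    using FU(2,5) by simp
  then show ?thesis by blast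
qed

lemma approx_open_finite:
  fixes M :: "'a::metric_space measure" and \<Phi> :: "'a \<Rightarrow> 'b::metric_space"
  assumes fm: "finite_measure M" and sb: "sets M = sets borel"
    and \<Phi>: "\<Phi> \<in> borel_measurable borel" and C: "finite C" and eta: "\<eta> > 0"
  shows "\<exists>H. open H \<and> measure M H < \<eta> \<and> (\<forall>c\<in>C. \<exists>U. open U \<and> \<Phi> -` ball c r - H = U - H)"
proof -
  interpret finite_measure M by fact
  define \<eta>' where "\<eta>' = \<eta> / (real (card C) + 1)"
  have eta': "\<eta>' > 0" unfolding \<eta>'_def using eta by simp
  have "\<forall>c. \<exists>H U. open H \<and> open U \<and> measure M H < \<eta>' \<and> \<Phi> -` ball c r - H = U - H"
  proof
    fix c
    have "\<Phi> -` ball c r \<inter> space borel \<in> sets borel"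
      by (rule measurable_sets[OF \<Phi>]) simp
    then have "\<Phi> -` ball c r \<in> sets borel" by simp
    then show "\<exists>H U. open H \<and> open U \<and> measure M H < \<eta>' \<and> \<Phi> -` ball c r - H = U - H"
      by (rule approx_open_piece[OF fm sb _ eta'])
  qed
  then have "\<exists>H. \<forall>c. \<exists>U. open (H c) \<and> open U \<and> measure M (H c) < \<eta>' \<and> \<Phi> -` ball c r - H c = U - H c"
    by (rule choice)
  then obtain H where "\<forall>c. \<exists>U. open (H c) \<and> open U \<and> measure M (H c) < \<eta>' \<and> \<Phi> -` ball c r - H c = U - H c"
    by (elim exE)
  then have "\<exists>U. \<forall>c. open (H c) \<and> open (U c) \<and> measure M (H c) < \<eta>' \<and> \<Phi> -` ball c r - H c = U c - H c"
    by (rule choice)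
  then obtain U where HU': "\<forall>c. open (H c) \<and> open (U c) \<and> measure M (H c) < \<eta>' \<and> \<Phi> -` ball c r - H c = U c - H c"
    by (elim exE)
  have HU: "\<And>c. open (H c)" "\<And>c. open (U c)" "\<And>c. measure M (H c) < \<eta>'"
    "\<And>c. \<Phi> -` ball c r - H c = U c - H c" using HU' by simp_all
  define Hall where "Hall = (\<Union>c\<in>C. H c)"
  have "open Hall" unfolding Hall_def using HU(1) by auto
  moreover have "measure M Hall < \<eta>"
  proof -
    have "measure M Hall \<le> (\<Sum>c\<in>C. measure M (H c))"
      unfolding Hall_def using C HU(1) sb by (intro measure_UNION_le) auto
    also have "\<dots> \<le> (\<Sum>c\<in>C. \<eta>')" using HU(3) by (intro sum_mono) (simp add: less_imp_le)
    also have "\<dots> = real (card C) * \<eta>'" by simp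
    also have "\<dots> < \<eta>" unfolding \<eta>'_def using eta by (simp add: field_simps)
    finally show ?thesis .
  qed
  moreover have "\<forall>c\<in>C. \<exists>U. open U \<and> \<Phi> -` ball c r - Hall = U - Hall"
  proof
    fix c assume c: "c \<in> C"
    have "H c \<subseteq> Hall" unfolding Hall_def using c by auto
    then have "\<Phi> -` ball c r - Hall = U c - Hall" using HU(4)[of c] by blast
    then show "\<exists>U. open U \<and> \<Phi> -` ball c r - Hall = U - Hall" using HU(2) by blast
  qed
  ultimately show ?thesis by (intro exI[of _ Hall]) simp
qed

lemma lusin_compact_target:
  fixes M :: "'a::metric_space measure" and \<Phi> :: "'a \<Rightarrow> 'b::metric_space"
  assumes fm: "finite_measure M" and sb: "sets M = sets borel"
    and \<Phi>: "\<Phi> \<in> borel_measurable borel" and cpt: "compact (UNIV::'b set)" and e: "e > 0"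
  shows "\<exists>K. closed K \<and> measure M (- K) < e \<and> continuous_on K \<Phi>"
proof -
  interpret finite_measure M by fact
  have tb: "\<forall>\<epsilon>>0. \<exists>k. finite k \<and> k \<subseteq> UNIV \<and> (UNIV::'b set) \<subseteq> (\<Union>x\<in>k. ball x \<epsilon>)"
    by (rule seq_compact_imp_totally_bounded[OF compact_imp_seq_compact[OF cpt]])
  have "\<forall>m. \<exists>k. finite k \<and> (UNIV::'b set) \<subseteq> (\<Union>x\<in>k. ball x (1 / real (Suc m)))"
    using tb by simp
  then have "\<exists>C. \<forall>m. finite (C m) \<and> (UNIV::'b set) \<subseteq> (\<Union>x\<in>C m. ball x (1 / real (Suc m)))"
    by (rule choice)
  then obtain C where C': "\<forall>m. finite (C m) \<and> (UNIV::'b set) \<subseteq> (\<Union>x\<in>C m. ball x (1 / real (Suc m)))"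
    by (elim exE)
  have C: "\<And>m. finite (C m)" "\<And>m. (UNIV::'b set) \<subseteq> (\<Union>x\<in>C m. ball x (1 / real (Suc m)))"
    using C' by simp_all
  have "\<forall>m. \<exists>H. open H \<and> measure M H < e/4 * (1/2)^m \<and>
      (\<forall>c\<in>C m. \<exists>U. open U \<and> \<Phi> -` ball c (1 / real (Suc m)) - H = U - H)"
  proof
    fix m
    show "\<exists>H. open H \<and> measure M H < e/4 * (1/2)^m \<and>
      (\<forall>c\<in>C m. \<exists>U. open U \<and> \<Phi> -` ball c (1 / real (Suc m)) - H = U - H)"
      by (rule approx_open_finite[OF fm sb \<Phi> C(1)]) (use e in simp)
  qed
  then have "\<exists>H. \<forall>m. open (H m) \<and> measure M (H m) < e/4 * (1/2)^m \<and>
      (\<forall>c\<in>C m. \<exists>U. open U \<and> \<Phi> -` ball c (1 / real (Suc m)) - H m = U - H m)"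
    by (rule choice)
  then obtain H where H': "\<forall>m. open (H m) \<and> measure M (H m) < e/4 * (1/2)^m \<and>
      (\<forall>c\<in>C m. \<exists>U. open U \<and> \<Phi> -` ball c (1 / real (Suc m)) - H m = U - H m)"
    by (elim exE)
  have H: "\<And>m. open (H m)" "\<And>m. measure M (H m) < e/4 * (1/2)^m"
    "\<And>m c. c \<in> C m \<Longrightarrow> \<exists>U. open U \<and> \<Phi> -` ball c (1 / real (Suc m)) - H m = U - H m"
    using H' by simp_all
  define K where "K = - (\<Union>m. H m)"
  have "closed K" unfolding K_def using H(1) by (auto intro: closed_Compl)
  moreover have "measure M (- K) < e"
  proof -
    have meas1: "H m \<in> sets M" for m using H(1) sb by simp
    have sm: "summable (\<lambda>i. e/4 * (1/2::real)^i)"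
      by (intro summable_mult summable_geometric) auto
    have summ: "summable (\<lambda>i. measure M (H i))"
      by (rule summable_comparison_test'[OF sm, of 0]) (use H(2) less_imp_le in auto)
    have s2: "(\<Sum>i. e/4 * (1/2::real)^i) = e/2"
    proof -
      have "(\<Sum>i. e/4 * (1/2::real)^i) = e/4 * (\<Sum>i. (1/2::real)^i)"
        by (rule suminf_mult) (rule summable_geometric, simp)
      also have "(\<Sum>i. (1/2::real)^i) = 2" using suminf_geometric[of "1/2::real"] by simp
      finally show ?thesis by simp
    qed
    have "(\<Sum>i. measure M (H i)) \<le> (\<Sum>i. e/4 * (1/2::real)^i)"
      by (intro suminf_le summ sm) (use H(2) less_imp_le in auto)
    moreover have "measure M (\<Union>i. H i) \<le> (\<Sum>i. measure M (H i))"
      using meas1 summ by (intro finite_measure_subadditive_countably) auto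
    ultimately have "measure M (\<Union>i. H i) \<le> e/2" using s2 by linarith
    then show ?thesis unfolding K_def using e by simp
  qed
  moreover have "continuous_on K \<Phi>"
    unfolding continuous_on_iff
  proof (intro ballI allI impI)
    fix x and \<epsilon> :: real assume xK: "x \<in> K" and ep: "\<epsilon> > 0"
    obtain m where m: "inverse (real (Suc m)) < \<epsilon>/2"
      using reals_Archimedean[of "\<epsilon>/2"] ep by auto
    define r where "r = 1 / real (Suc m)"
    have r: "2 * r < \<epsilon>" "r > 0" using m unfolding r_def by (simp_all add: inverse_eq_divide)
    have "\<Phi> x \<in> (\<Union>c\<in>C m. ball c r)" using C(2)[of m] unfolding r_def by blast
    then obtain c where c: "c \<in> C m" "\<Phi> x \<in> ball c r" by blast
    obtain U where U: "open U" "\<Phi> -` ball c r - H m = U - H m"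
      using H(3)[OF c(1)] unfolding r_def by blast
    have xH: "x \<notin> H m" using xK unfolding K_def by simp
    have "x \<in> U" using c(2) xH U(2) by blast
    then obtain d where d: "d > 0" "ball x d \<subseteq> U" using U(1) openE by blast
    show "\<exists>d>0. \<forall>x'\<in>K. dist x' x < d \<longrightarrow> dist (\<Phi> x') (\<Phi> x) < \<epsilon>"
    proof (intro exI[of _ d] conjI ballI impI)
      show "d > 0" by fact
      fix x' assume x'K: "x' \<in> K" and dx: "dist x' x < d"
      have "x' \<in> U" using d(2) dx by (auto simp: dist_commute)
      moreover have "x' \<notin> H m" using x'K unfolding K_def by simp
      ultimately have "\<Phi> x' \<in> ball c r" using U(2) by blast
      have "dist (\<Phi> x') (\<Phi> x) \<le> dist (\<Phi> x') c + dist c (\<Phi> x)"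
        by (rule dist_triangle)
      also have "\<dots> < 2 * r" using \<open>\<Phi> x' \<in> ball c r\<close> c(2) by (simp add: dist_commute)
      finally show "dist (\<Phi> x') (\<Phi> x) < \<epsilon>" using r by simp
    qed
  qed
  ultimately show ?thesis by blast
qed

lemma pointwise_bound:
  fixes \<Phi> :: "'a::metric_space \<Rightarrow> 'b::metric_space" and f :: "nat \<Rightarrow> 'a \<Rightarrow> 'a" and g :: "nat \<Rightarrow> 'b \<Rightarrow> 'b"
  assumes D: "\<forall>y y'::'b. dist y y' \<le> D" and \<delta>: "\<delta> > 0" and \<eta>: "\<eta> \<ge> 0"
    and uc: "\<forall>u\<in>K. \<forall>v\<in>K. dist u v < \<delta> \<longrightarrow> dist (\<Phi> u) (\<Phi> v) \<le> \<eta>"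
    and cx: "\<forall>k\<in>I. \<Phi> (f k x) = g k (\<Phi> x)" and cx': "\<forall>k\<in>I. \<Phi> (f k x') = g k (\<Phi> x')"
  shows "(\<Sum>k\<in>I. dist (g k (\<Phi> x)) (g k (\<Phi> x'))) \<le> (D/\<delta>) * (\<Sum>k\<in>I. dist (f k x) (f k x')) + \<eta> * card I
     + D * ((\<Sum>k\<in>I. indicator (-K) (f k x)) + (\<Sum>k\<in>I. indicator (-K) (f k x')))"
proof -
  have D0: "D \<ge> 0" using D zero_le_dist order_trans by blast
  have trm: "dist (g k (\<Phi> x)) (g k (\<Phi> x')) \<le> (D/\<delta>) * dist (f k x) (f k x') + \<eta>
     + D * (indicator (-K) (f k x) + indicator (-K) (f k x'))" if k: "k \<in> I" for k
  proof -
    have eq: "dist (g k (\<Phi> x)) (g k (\<Phi> x')) = dist (\<Phi> (f k x)) (\<Phi> (f k x'))"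
      using cx cx' k by simp
    have nn1: "(D/\<delta>) * dist (f k x) (f k x') \<ge> 0" using D0 \<delta> by simp
    have nn2: "D * (indicator (-K) (f k x) + indicator (-K) (f k x')) \<ge> 0"
      using D0 by (simp add: indicator_def)
    have Dd: "dist (\<Phi> (f k x)) (\<Phi> (f k x')) \<le> D" using D by simp
    show ?thesis
    proof (cases "f k x \<in> K \<and> f k x' \<in> K")
      case True
      show ?thesis
      proof (cases "dist (f k x) (f k x') < \<delta>")
        case True2: True
        then have "dist (\<Phi> (f k x)) (\<Phi> (f k x')) \<le> \<eta>" using uc True by blast
        then show ?thesis using eq nn1 nn2 by linarith
      next
        case False
        then have "D \<le> (D/\<delta>) * dist (f k x) (f k x')"
          using D0 \<delta> by (simp add: field_simps mult_left_mono)
        then show ?thesis using eq Dd nn2 \<eta> by linarith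
      qed
    next
      case False
      then have "indicator (-K) (f k x) + indicator (-K) (f k x') \<ge> (1::real)"
        by (auto simp: indicator_def)
      then have "D \<le> D * (indicator (-K) (f k x) + indicator (-K) (f k x'))"
        using D0 by (metis mult.right_neutral mult_left_mono)
      then show ?thesis using eq Dd nn1 \<eta> by linarith
    qed
  qed
  have "(\<Sum>k\<in>I. dist (g k (\<Phi> x)) (g k (\<Phi> x'))) \<le> (\<Sum>k\<in>I. (D/\<delta>) * dist (f k x) (f k x') + \<eta>
     + D * (indicator (-K) (f k x) + indicator (-K) (f k x')))"
    using trm by (rule sum_mono)
  also have "\<dots> = (D/\<delta>) * (\<Sum>k\<in>I. dist (f k x) (f k x')) + \<eta> * card I
     + D * ((\<Sum>k\<in>I. indicator (-K) (f k x)) + (\<Sum>k\<in>I. indicator (-K) (f k x')))"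
    by (simp add: sum.distrib sum_distrib_left distrib_left mult.commute)
  finally show ?thesis .
qed

lemma markov_bad:
  fixes M :: "'a::metric_space measure" and f :: "nat \<Rightarrow> 'a \<Rightarrow> 'a" and a c :: real
  assumes ps: "prob_space M" and sb: "sets M = sets borel" and I: "finite I"
    and f: "\<And>k. k \<in> I \<Longrightarrow> f k \<in> M \<rightarrow>\<^sub>M M" and fd: "\<And>k. k \<in> I \<Longrightarrow> distr M M (f k) = M"
    and K: "closed K" and c: "c > 0" and a: "a > 0"
  shows "measure M {x. a \<le> (\<Sum>k\<in>I. indicator (-K) (f k x) :: real)} \<le> real (card I) * measure M (-K) / a"
proof -
  interpret prob_space M by fact
  have sp: "space M = UNIV" using sb by (metis sets_eq_imp_space_eq space_borel)
  have Km: "-K \<in> sets M" using K sb by auto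
  have im: "integrable M (\<lambda>x. indicator (-K) (f k x) :: real)" if k: "k \<in> I" for k
  proof -
    have "(\<lambda>x. indicator (-K) (f k x) :: real) \<in> borel_measurable M"
      using f[OF k] Km by measurable
    then show ?thesis by (intro integrable_const_bound[where B=1]) (auto simp: indicator_def)
  qed
  have int1: "(\<integral>x. indicator (-K) (f k x) \<partial>M) = measure M (-K)" if k: "k \<in> I" for k
  proof -
    have "(\<integral>x. indicator (-K) (f k x) \<partial>M) = integral\<^sup>L (distr M M (f k)) (indicator (-K) :: _ \<Rightarrow> real)"
      using f[OF k] Km by (intro integral_distr[symmetric]) auto
    also have "\<dots> = measure M (-K)" using fd[OF k] sp by simp
    finally show ?thesis .
  qed
  have intu: "integrable M (\<lambda>x. \<Sum>k\<in>I. indicator (-K) (f k x) :: real)"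
    using Bochner_Integration.integrable_sum[where f="\<lambda>k x. indicator (-K) (f k x) :: real", OF im] by simp
  have "(\<integral>x. (\<Sum>k\<in>I. indicator (-K) (f k x) :: real) \<partial>M) = (\<Sum>k\<in>I. (\<integral>x. indicator (-K) (f k x) \<partial>M))"
    using Bochner_Integration.integral_sum[where f="\<lambda>k x. indicator (-K) (f k x) :: real" and I=I, OF im] by simp
  also have "\<dots> = real (card I) * measure M (-K)" using int1 by simp
  finally have ieq: "(\<integral>x. (\<Sum>k\<in>I. indicator (-K) (f k x) :: real) \<partial>M) = real (card I) * measure M (-K)" .
  have "measure M {x\<in>space M. (\<Sum>k\<in>I. indicator (-K) (f k x) :: real) \<ge> a}
      \<le> (\<integral>x. (\<Sum>k\<in>I. indicator (-K) (f k x) :: real) \<partial>M) / a"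
    by (rule integral_Markov_inequality_measure[OF intu _ _ a, of UNIV]) (auto simp: sp sum_nonneg sb)
  then show ?thesis using ieq sp by simp
qed

lemma distr_funpow:
  assumes f: "f \<in> M \<rightarrow>\<^sub>M M" and fd: "distr M M f = M"
  shows "(f ^^ k) \<in> M \<rightarrow>\<^sub>M M \<and> distr M M (f ^^ k) = M"
proof (induction k)
  case 0
  then show ?case by (simp add: id_def)
next
  case (Suc k)
  have m: "(f ^^ Suc k) \<in> M \<rightarrow>\<^sub>M M"
    using Suc f by (simp add: measurable_comp)
  have "distr M M (f ^^ Suc k) = distr M M (f \<circ> (f ^^ k))" by simp
  also have "\<dots> = distr (distr M M (f ^^ k)) M f"
    using Suc f by (intro distr_distr[symmetric]) auto
  also have "\<dots> = M" using Suc fd by simp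
  finally have "distr M M (f ^^ Suc k) = M" .
  then show ?case using m by blast
qed

lemma AE_funpow_conj:
  assumes f: "f \<in> M \<rightarrow>\<^sub>M M" and fd: "distr M M f = M"
    and ae: "AE y in M. \<Phi> (f y) = g (\<Phi> y)"
  shows "AE y in M. \<forall>k. \<Phi> ((f ^^ k) y) = (g ^^ k) (\<Phi> y)"
proof -
  have "AE y in M. \<Phi> ((f ^^ k) y) = (g ^^ k) (\<Phi> y)" for k
  proof (induction k)
    case 0
    then show ?case by simp
  next
    case (Suc k)
    have fk: "(f ^^ k) \<in> M \<rightarrow>\<^sub>M M" "distr M M (f ^^ k) = M" using distr_funpow[OF f fd] by auto
    have "AE y in distr M M (f ^^ k). \<Phi> (f y) = g (\<Phi> y)" by (subst fk(2)) (rule ae)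
    then have "AE y in M. \<Phi> (f ((f ^^ k) y)) = g (\<Phi> ((f ^^ k) y))"
      by (rule AE_distrD[OF fk(1)])
    with Suc show ?case by eventually_elim simp
  qed
  then show ?thesis by (simp add: AE_all_countable)
qed

lemma dyn_pos:
  "dyn_dist T {0..<int n} x x' = (\<Sum>k\<in>{..<n}. dist ((T^^k) x) ((T^^k) x'))"
proof -
  have e: "{0..<int n} = int ` {..<n}"
    using image_int_atLeastLessThan[of 0 n] by (simp add: lessThan_atLeast0)
  show ?thesis unfolding dyn_dist_def e
    by (subst sum.reindex) (auto simp: zpow_def inj_on_def)
qed

lemma dyn_neg:
  assumes "inv T = T'"
  shows "dyn_dist T {- int n..<0} x x' = (\<Sum>k\<in>{1..n}. dist ((T'^^k) x) ((T'^^k) x'))"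
proof -
  have e: "{- int n..<0} = (\<lambda>k. - int k) ` {1..n}"
  proof
    show "(\<lambda>k. - int k) ` {1..n} \<subseteq> {- int n..<0}" by auto
    show "{- int n..<0} \<subseteq> (\<lambda>k. - int k) ` {1..n}"
    proof
      fix j assume j: "j \<in> {- int n..<0}"
      then have "j = - int (nat (- j))" "nat (- j) \<in> {1..n}" by auto
      then show "j \<in> (\<lambda>k. - int k) ` {1..n}" by (rule image_eqI)
    qed
  qed
  have inj: "inj_on (\<lambda>k. - int k) {1..n}" by (auto simp: inj_on_def)
  show ?thesis unfolding dyn_dist_def e sum.reindex[OF inj]
    by (intro sum.cong) (auto simp: zpow_def assms)
qed

lemma homeo_facts:
  assumes h: "homeomorphism UNIV UNIV T T'"
  shows "inv T = T'" "\<And>x. T' (T x) = x" "\<And>x. T (T' x) = x" "continuous_on UNIV T" "continuous_on UNIV T'"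
proof -
  show a: "\<And>x. T' (T x) = x" "\<And>x. T (T' x) = x" "continuous_on UNIV T" "continuous_on UNIV T'"
    using h unfolding homeomorphism_def by auto
  show "inv T = T'" by (rule inv_equality) (use a in auto)
qed

theorem mainTheorem5:
  fixes M :: "'a::metric_space measure" and T :: "'a \<Rightarrow> 'a"
    and N :: "'b::metric_space measure" and S :: "'b \<Rightarrow> 'b"
    and \<Phi> :: "'a \<Rightarrow> 'b" and \<epsilon> :: real
  assumes "compact_model_pps M T" and "compact_model_pps N S"
    and "borel_factor_map M T N S \<Phi>"
    and "\<epsilon> > 0"
  shows "\<exists>L::real. \<forall>\<^sub>F n in sequentially. \<exists>X0. compact X0 \<and> measure M X0 > 1 - \<epsilon> \<and>
           continuous_on X0 \<Phi> \<and>
           almost_lipschitz_on X0 (dyn_dist T {- int n..<0}) (dyn_dist S {- int n..<0}) (\<epsilon> * real n) L \<Phi> \<and>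
           almost_lipschitz_on X0 (dyn_dist T {0..<int n}) (dyn_dist S {0..<int n}) (\<epsilon> * real n) L \<Phi>"
proof -
  note ep = \<open>\<epsilon> > 0\<close>
  from assms(1) obtain T' where cA: "compact (UNIV :: 'a set)" and hT: "homeomorphism UNIV UNIV T T'"
    and ps: "prob_space M" and sb: "sets M = sets borel" and Tm: "T \<in> M \<rightarrow>\<^sub>M M" and Td: "distr M M T = M"
    unfolding compact_model_pps_def by blast
  from assms(2) obtain S' where cB: "compact (UNIV :: 'b set)" and hS: "homeomorphism UNIV UNIV S S'"
    unfolding compact_model_pps_def by blast
  from assms(3) have \<Phi>m: "\<Phi> \<in> borel_measurable borel" and aeT: "AE x in M. \<Phi> (T x) = S (\<Phi> x)"
    unfolding borel_factor_map_def by auto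
  interpret prob_space M by fact
  have fm: "finite_measure M" by unfold_locales
  have sp: "space M = UNIV" using sb by (metis sets_eq_imp_space_eq space_borel)
  note hTf = homeo_facts[OF hT] and hSf = homeo_facts[OF hS]
  have T'm: "T' \<in> M \<rightarrow>\<^sub>M M"
  proof -
    have "T' \<in> borel_measurable borel" by (rule borel_measurable_continuous_onI) (rule hTf(5))
    moreover have "measurable M M = measurable borel borel" by (rule measurable_cong_sets[OF sb sb])
    ultimately show ?thesis by simp
  qed
  have T'd: "distr M M T' = M"
  proof -
    have "distr M M T' = distr (distr M M T) M T'" using Td by simp
    also have "\<dots> = distr M M (T' \<circ> T)" by (rule distr_distr[OF T'm Tm])
    also have "T' \<circ> T = (\<lambda>x. x)" using hTf(2) by (simp add: fun_eq_iff)
    finally show ?thesis by simp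
  qed
  have aeT': "AE x in M. \<Phi> (T' x) = S' (\<Phi> x)"
  proof -
    have "AE y in distr M M T'. \<Phi> (T y) = S (\<Phi> y)" by (subst T'd) (rule aeT)
    then have "AE x in M. \<Phi> (T (T' x)) = S (\<Phi> (T' x))" by (rule AE_distrD[OF T'm])
    then show ?thesis
    proof (rule AE_mp, intro AE_I2 impI)
      fix x assume "\<Phi> (T (T' x)) = S (\<Phi> (T' x))"
      then have "S' (\<Phi> x) = S' (S (\<Phi> (T' x)))" using hTf(3) by simp
      then show "\<Phi> (T' x) = S' (\<Phi> x)" using hSf(2) by simp
    qed
  qed
  have aeP: "AE x in M. \<forall>k. \<Phi> ((T ^^ k) x) = (S ^^ k) (\<Phi> x)"
    by (rule AE_funpow_conj[OF Tm Td aeT])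
  have aeN: "AE x in M. \<forall>k. \<Phi> ((T' ^^ k) x) = (S' ^^ k) (\<Phi> x)"
    by (rule AE_funpow_conj[OF T'm T'd aeT'])
  have "AE x in M. (\<forall>k. \<Phi> ((T ^^ k) x) = (S ^^ k) (\<Phi> x)) \<and> (\<forall>k. \<Phi> ((T' ^^ k) x) = (S' ^^ k) (\<Phi> x))"
    using aeP aeN by eventually_elim simp
  then obtain Nl where Nl: "{x \<in> space M. \<not> ((\<forall>k. \<Phi> ((T ^^ k) x) = (S ^^ k) (\<Phi> x)) \<and> (\<forall>k. \<Phi> ((T' ^^ k) x) = (S' ^^ k) (\<Phi> x)))} \<subseteq> Nl"
    "emeasure M Nl = 0" "Nl \<in> sets M"
    by (rule AE_E)
  have mNl: "measure M Nl = 0" using Nl(2) by (simp add: measure_def)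
  have "bounded (UNIV :: 'b set)" using cB by (rule compact_imp_bounded)
  then obtain b where b: "\<forall>y\<in>(UNIV::'b set). dist undefined y \<le> b"
    unfolding bounded_any_center[of _ undefined] by blast
  define D where "D = 2 * b + \<epsilon>"
  have D: "\<forall>y y'::'b. dist y y' \<le> D"
  proof (intro allI)
    fix y y' :: 'b
    have "dist y y' \<le> dist undefined y + dist undefined y'" by (rule dist_triangle3)
    also have "\<dots> \<le> 2 * b" using bspec[OF b UNIV_I, of y] bspec[OF b UNIV_I, of y'] by linarith
    finally show "dist y y' \<le> D" unfolding D_def using ep by simp
  qed
  have b0: "b \<ge> 0" using bspec[OF b UNIV_I, of undefined] by simp
  have Dge: "D \<ge> \<epsilon>" unfolding D_def using b0 by simp
  have D0: "D > 0" using Dge ep by simp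
  define c where "c = \<epsilon> / (4 * D)"
  define \<eta> where "\<eta> = c * \<epsilon> / 8"
  have c0: "c > 0" unfolding c_def using ep D0 by simp
  have eta0: "\<eta> > 0" unfolding \<eta>_def using c0 ep by simp
  have cD: "D * c = \<epsilon> / 4" unfolding c_def using D0 by simp
  have etac: "\<eta> / c = \<epsilon> / 8" unfolding \<eta>_def using c0 by simp
  have etasmall: "\<eta> \<le> \<epsilon> / 32"
  proof -
    have "c \<le> 1/4" unfolding c_def using D0 Dge ep by (simp add: field_simps)
    then show ?thesis unfolding \<eta>_def using ep by (simp add: field_simps)
  qed
  obtain K where K: "closed K" "measure M (- K) < \<eta>" "continuous_on K \<Phi>"
    using lusin_compact_target[OF fm sb \<Phi>m cB eta0] by (elim exE conjE)
  have cK: "compact K" using compact_Int_closed[OF cA K(1)] by simp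
  have "uniformly_continuous_on K \<Phi>" by (rule compact_uniformly_continuous[OF K(3) cK])
  then have "\<exists>d>0. \<forall>x\<in>K. \<forall>x'\<in>K. dist x' x < d \<longrightarrow> dist (\<Phi> x') (\<Phi> x) < \<epsilon>/2"
  proof -
    have "\<epsilon>/2 > 0" using ep by simp
    then show ?thesis using \<open>uniformly_continuous_on K \<Phi>\<close> unfolding uniformly_continuous_on_def by blast
  qed
  then obtain \<delta> where \<delta>: "\<delta> > 0" and d\<delta>: "\<forall>x\<in>K. \<forall>x'\<in>K. dist x' x < \<delta> \<longrightarrow> dist (\<Phi> x') (\<Phi> x) < \<epsilon>/2"
    by blast
  have uc: "\<forall>u\<in>K. \<forall>v\<in>K. dist u v < \<delta> \<longrightarrow> dist (\<Phi> u) (\<Phi> v) \<le> \<epsilon>/2"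
  proof (intro ballI impI)
    fix u v assume "u \<in> K" "v \<in> K" "dist u v < \<delta>"
    then have "dist (\<Phi> u) (\<Phi> v) < \<epsilon>/2" using d\<delta>[rule_format, of v u] by simp
    then show "dist (\<Phi> u) (\<Phi> v) \<le> \<epsilon>/2" by simp
  qed
  have Km: "-K \<in> sets M" using K(1) sb by simp
  have fTk: "(T ^^ k) \<in> M \<rightarrow>\<^sub>M M" "distr M M (T ^^ k) = M" for k
    using distr_funpow[OF Tm Td] by auto
  have fT'k: "(T' ^^ k) \<in> M \<rightarrow>\<^sub>M M" "distr M M (T' ^^ k) = M" for k
    using distr_funpow[OF T'm T'd] by auto
  show ?thesis
  proof (intro exI[of _ "D / \<delta>"] eventually_sequentiallyI[of 1])
    fix n :: nat assume n1: "1 \<le> n"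
    show "\<exists>X0. compact X0 \<and> measure M X0 > 1 - \<epsilon> \<and> continuous_on X0 \<Phi> \<and>
           almost_lipschitz_on X0 (dyn_dist T {- int n..<0}) (dyn_dist S {- int n..<0}) (\<epsilon> * real n) (D / \<delta>) \<Phi> \<and>
           almost_lipschitz_on X0 (dyn_dist T {0..<int n}) (dyn_dist S {0..<int n}) (\<epsilon> * real n) (D / \<delta>) \<Phi>"
    proof -
    have [measurable]: "-K \<in> sets M" by (rule Km)
    have [measurable]: "(T ^^ k) \<in> M \<rightarrow>\<^sub>M M" "(T' ^^ k) \<in> M \<rightarrow>\<^sub>M M" for k
      using fTk fT'k by auto
    define bp where "bp x = (\<Sum>k\<in>{..<n}. indicator (-K) ((T ^^ k) x) :: real)" for x
    define bn where "bn x = (\<Sum>k\<in>{1..n}. indicator (-K) ((T' ^^ k) x) :: real)" for x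
    define Bp where "Bp = {x. c * real n \<le> bp x}"
    define Bn where "Bn = {x. c * real n \<le> bn x}"
    have cn: "c * real n > 0" using c0 n1 by simp
    have mBp: "measure M Bp \<le> \<epsilon> / 8"
    proof -
      have "measure M Bp \<le> real (card {..<n}) * measure M (-K) / (c * real n)"
        unfolding Bp_def bp_def
        by (rule markov_bad[OF ps sb finite_lessThan _ _ K(1) c0 cn]) (use fTk in auto)
      also have "\<dots> = measure M (-K) / c" using n1 by (simp add: field_simps)
      also have "\<dots> \<le> \<eta> / c" using K(2) c0 by (simp add: divide_right_mono)
      finally show ?thesis using etac by simp
    qed
    have mBn: "measure M Bn \<le> \<epsilon> / 8"
    proof -
      have "measure M Bn \<le> real (card {1..n}) * measure M (-K) / (c * real n)"
        unfolding Bn_def bn_def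
        by (rule markov_bad[OF ps sb finite_atLeastAtMost _ _ K(1) c0 cn]) (use fT'k in auto)
      also have "\<dots> = measure M (-K) / c" using n1 by (simp add: field_simps)
      also have "\<dots> \<le> \<eta> / c" using K(2) c0 by (simp add: divide_right_mono)
      finally show ?thesis using etac by simp
    qed
    have bpm: "bp \<in> borel_measurable M" unfolding bp_def by measurable
    have bnm: "bn \<in> borel_measurable M" unfolding bn_def by measurable
    have Bpm: "Bp \<in> sets M"
    proof -
      have "{x \<in> space M. c * real n \<le> bp x} \<in> sets M" using bpm by measurable
      then show ?thesis unfolding Bp_def using sp by simp
    qed
    have Bnm: "Bn \<in> sets M"
    proof -
      have "{x \<in> space M. c * real n \<le> bn x} \<in> sets M" using bnm by measurable
      then show ?thesis unfolding Bn_def using sp by simp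
    qed
    define G where "G = K - Nl - Bp - Bn"
    have Gm: "G \<in> sets M" unfolding G_def using K(1) sb Nl(3) Bpm Bnm by auto
    have cG: "- G = -K \<union> Nl \<union> Bp \<union> Bn" unfolding G_def by auto
    have "measure M (- G) \<le> measure M (-K \<union> Nl \<union> Bp) + measure M Bn"
      unfolding cG using Km Nl(3) Bpm Bnm by (intro measure_subadditive) auto
    also have "measure M (-K \<union> Nl \<union> Bp) \<le> measure M (-K \<union> Nl) + measure M Bp"
      using Km Nl(3) Bpm by (intro measure_subadditive) auto
    also have "measure M (-K \<union> Nl) \<le> measure M (-K) + measure M Nl"
      using Km Nl(3) by (intro measure_subadditive) auto
    finally have mcG: "measure M (- G) \<le> measure M (-K) + measure M Nl + measure M Bp + measure M Bn"
      by simp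
    have "measure M G = 1 - measure M (- G)"
    proof -
      have "-G \<in> sets M" using Gm sp by (metis Compl_eq_Diff_UNIV sets.compl_sets)
      then have "prob (space M - (-G)) = 1 - prob (-G)" by (rule prob_compl)
      then show ?thesis using sp by simp
    qed
    then have mG: "measure M G \<ge> 1 - (\<epsilon>/32 + \<epsilon>/4)"
      using mcG mNl mBp mBn K(2) etasmall by linarith
    have e2: "\<epsilon> / 2 > 0" using ep by simp
    have "\<exists>F U. closed F \<and> open U \<and> F \<subseteq> G \<and> G \<subseteq> U \<and> measure M (U - F) < \<epsilon>/2"
    proof -
      have Gb: "G \<in> sets borel" using Gm sb by simp
      show ?thesis by (rule mp[OF spec[OF approx_reg[OF fm sb Gb], of "\<epsilon>/2"] e2])
    qed
    then obtain F U where FU: "closed F" "open U" "F \<subseteq> G" "G \<subseteq> U" "measure M (U - F) < \<epsilon>/2"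
      by blast
    have Fm: "F \<in> sets M" using FU(1) sb by simp
    have "measure M (G - F) \<le> measure M (U - F)"
      using FU Gm Fm sb by (intro finite_measure_mono) auto
    moreover have "measure M (G - F) = measure M G - measure M F"
      using FU(3) Gm Fm by (intro finite_measure_Diff) auto
    ultimately have mF: "measure M F > 1 - \<epsilon>" using mG FU(5) ep by linarith
    have FK: "F \<subseteq> K" using FU(3) unfolding G_def by auto
    have good: "(\<forall>k. \<Phi> ((T ^^ k) x) = (S ^^ k) (\<Phi> x)) \<and> (\<forall>k. \<Phi> ((T' ^^ k) x) = (S' ^^ k) (\<Phi> x))
       \<and> bp x < c * real n \<and> bn x < c * real n" if "x \<in> F" for x
    proof -
      have xG: "x \<in> G" using that FU(3) by auto
      then have "x \<notin> Nl" "x \<notin> Bp" "x \<notin> Bn" unfolding G_def by auto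
      then show ?thesis using Nl(1) sp unfolding Bp_def Bn_def by auto
    qed
    have lipgen: "(\<Sum>k\<in>I. dist (g k (\<Phi> x)) (g k (\<Phi> x'))) \<le> (D/\<delta>) * (\<Sum>k\<in>I. dist (f k x) (f k x')) + \<epsilon> * real n"
      if cx: "\<forall>k\<in>I. \<Phi> (f k x) = g k (\<Phi> x)" and cx': "\<forall>k\<in>I. \<Phi> (f k x') = g k (\<Phi> x')"
        and cI: "card I = n"
        and bx: "(\<Sum>k\<in>I. indicator (-K) (f k x) :: real) < c * real n"
        and bx': "(\<Sum>k\<in>I. indicator (-K) (f k x') :: real) < c * real n"
      for I :: "nat set" and f g x x'
    proof -
      have "(\<Sum>k\<in>I. dist (g k (\<Phi> x)) (g k (\<Phi> x'))) \<le> (D/\<delta>) * (\<Sum>k\<in>I. dist (f k x) (f k x')) + \<epsilon>/2 * card I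
         + D * ((\<Sum>k\<in>I. indicator (-K) (f k x)) + (\<Sum>k\<in>I. indicator (-K) (f k x')))"
        using ep by (intro pointwise_bound[OF D \<delta> _ uc cx cx']) simp
      also have "D * ((\<Sum>k\<in>I. indicator (-K) (f k x)) + (\<Sum>k\<in>I. indicator (-K) (f k x'))) \<le> D * (2 * (c * real n))"
        using bx bx' D0 by (intro mult_left_mono) auto
      also have "D * (2 * (c * real n)) = \<epsilon> / 2 * real n" using cD by (simp add: field_simps)
      finally show ?thesis using cI by simp
    qed
    show ?thesis
    proof (intro exI[of _ F] conjI)
      show "compact F" using compact_Int_closed[OF cA FU(1)] by simp
      show "measure M F > 1 - \<epsilon>" by (rule mF)
      show "continuous_on F \<Phi>" by (rule continuous_on_subset[OF K(3) FK])
      show "almost_lipschitz_on F (dyn_dist T {- int n..<0}) (dyn_dist S {- int n..<0}) (\<epsilon> * real n) (D / \<delta>) \<Phi>"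
        unfolding almost_lipschitz_on_def
      proof (intro ballI)
        fix x x' assume x: "x \<in> F" and x': "x' \<in> F"
        show "dyn_dist S {- int n..<0} (\<Phi> x) (\<Phi> x') \<le> D / \<delta> * dyn_dist T {- int n..<0} x x' + \<epsilon> * real n"
          unfolding dyn_neg[OF hTf(1)] dyn_neg[OF hSf(1)]
          using lipgen[of "{1..n}" "\<lambda>k. T' ^^ k" x "\<lambda>k. S' ^^ k" x'] good[OF x] good[OF x']
          unfolding bn_def by (simp add: algebra_simps)
      qed
      show "almost_lipschitz_on F (dyn_dist T {0..<int n}) (dyn_dist S {0..<int n}) (\<epsilon> * real n) (D / \<delta>) \<Phi>"
        unfolding almost_lipschitz_on_def
      proof (intro ballI)
        fix x x' assume x: "x \<in> F" and x': "x' \<in> F"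
        show "dyn_dist S {0..<int n} (\<Phi> x) (\<Phi> x') \<le> D / \<delta> * dyn_dist T {0..<int n} x x' + \<epsilon> * real n"
          unfolding dyn_pos
          using lipgen[of "{..<n}" "\<lambda>k. T ^^ k" x "\<lambda>k. S ^^ k" x'] good[OF x] good[OF x']
          unfolding bp_def by (simp add: algebra_simps)
      qed
    qed
    qed
  qed
qed

end
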